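(* Let $m\ge 1$ and $n_1,\ldots,n_m\ge 2$. Let $I=(i_1,\ldots,i_m)$ and $J=(j_1,\ldots,j_m)$ be multi-indices with $i_k,j_k\in\{1,\ldots,n_k\}$, and let $c\neq 0$ be a complex scalar (with $c$ real when $I=J$, so that $\mathcal{E}^{IJ}(c)$ is Hermitian). If $I=J$, then $\operatorname{hrank}\mathcal{E}^{IJ}(c)=1$. If $I\neq J$, then $\operatorname{hrank}\mathcal{E}^{IJ}(c)=2d$, where $d$ is the number of indices $k\in\{1,\ldots,m\}$ with $i_k\neq j_k$.
   Context: For positive integers $n_1,\ldots,n_m$, $\mathbb{C}^{[n_1,\ldots,n_m]}$ denotes the real vector space of Hermitian tensors, i.e. tensors $\mathcal{H}\in\mathbb{C}^{n_1\times\cdots\times n_m\times n_1\times\cdots\times n_m}$ with $\mathcal{H}_{i_1\ldots i_m j_1\ldots j_m}=\overline{\mathcal{H}_{j_1\ldots j_m i_1\ldots i_m}}$ for all indices. For vectors $v_i\in\mathbb{C}^{n_i}$, $[v_1,\ldots,v_m]_{\otimes h}:=v_1\otimes\cdots\otimes v_m\otimes\overline{v_1}\otimes\cdots\otimes\overline{v_m}$. Every $\mathcal{H}\in\mathbb{C}^{[n_1,\ldots,n_m]}$ can be written as $\mathcal{H}=\sum_{i=1}^r\lambda_i[u_i^1,\ldots,u_i^m]_{\otimes h}$ with $\lambda_i\in\mathbb{R}$, $u_i^j\in\mathbb{C}^{n_j}$ (a Hermitian decomposition); the Hermitian rank $\operatorname{hrank}(\mathcal{H})$ is the smallest such $r$.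 For multi-indices $I,J$ and a scalar $c$, $\mathcal{E}^{IJ}(c)$ is the Hermitian tensor whose $(i_1,\ldots,i_m,j_1,\ldots,j_m)$ entry equals $c$, whose $(j_1,\ldots,j_m,i_1,\ldots,i_m)$ entry equals $\overline{c}$, and all other entries are zero. *)

theory Defs
  imports Complex_Main
begin

text \<open>The order is m; the dimensions are n k (k < m), indices are
0-based, i.e. i_k ranges over {0..<n k}. A multi-index is a function
I :: nat \<Rightarrow> nat with I k < n k for k < m and I k = 0 for k \<ge> m (so that
equality of multi-indices is equality of functions). A tensor in
C^{[n_1,...,n_m]} is a function H :: (nat\<Rightarrow>nat) \<Rightarrow> (nat\<Rightarrow>nat) \<Rightarrow> complex,
H I J being the entry at (i_1..i_m, j_1..j_m); only valid multi-indices matter.\<close>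

definition valid_idx :: "nat \<Rightarrow> (nat \<Rightarrow> nat) \<Rightarrow> (nat \<Rightarrow> nat) \<Rightarrow> bool" where
  "valid_idx m n I \<longleftrightarrow> (\<forall>k<m. I k < n k) \<and> (\<forall>k\<ge>m. I k = 0)"

definition hermitian_tensor :: "nat \<Rightarrow> (nat \<Rightarrow> nat) \<Rightarrow> ((nat \<Rightarrow> nat) \<Rightarrow> (nat \<Rightarrow> nat) \<Rightarrow> complex) \<Rightarrow> bool" where
  "hermitian_tensor m n H \<longleftrightarrow>
     (\<forall>I J. valid_idx m n I \<longrightarrow> valid_idx m n J \<longrightarrow> H I J = cnj (H J I))"

text \<open>The rank-one Hermitian tensor [v_1,...,v_m]_{\<otimes>h}, with v k the vector in C^{n_k}
(only entries v k i with i < n k are used).\<close>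
definition herm_rank_one :: "nat \<Rightarrow> (nat \<Rightarrow> nat \<Rightarrow> complex) \<Rightarrow> (nat \<Rightarrow> nat) \<Rightarrow> (nat \<Rightarrow> nat) \<Rightarrow> complex" where
  "herm_rank_one m v I J = (\<Prod>k<m. v k (I k)) * (\<Prod>k<m. cnj (v k (J k)))"

definition has_herm_decomp :: "nat \<Rightarrow> (nat \<Rightarrow> nat) \<Rightarrow> ((nat \<Rightarrow> nat) \<Rightarrow> (nat \<Rightarrow> nat) \<Rightarrow> complex) \<Rightarrow> nat \<Rightarrow> bool" where
  "has_herm_decomp m n H r \<longleftrightarrow>
     (\<exists>(lam :: nat \<Rightarrow> real) (u :: nat \<Rightarrow> nat \<Rightarrow> nat \<Rightarrow> complex).
        \<forall>I J. valid_idx m n I \<longrightarrow> valid_idx m n J \<longrightarrow>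
          H I J = (\<Sum>i<r. complex_of_real (lam i) * herm_rank_one m (u i) I J))"

definition hrank :: "nat \<Rightarrow> (nat \<Rightarrow> nat) \<Rightarrow> ((nat \<Rightarrow> nat) \<Rightarrow> (nat \<Rightarrow> nat) \<Rightarrow> complex) \<Rightarrow> nat" where
  "hrank m n H = (LEAST r. has_herm_decomp m n H r)"

definition E_tensor :: "(nat \<Rightarrow> nat) \<Rightarrow> (nat \<Rightarrow> nat) \<Rightarrow> complex \<Rightarrow> (nat \<Rightarrow> nat) \<Rightarrow> (nat \<Rightarrow> nat) \<Rightarrow> complex" where
  "E_tensor I J c X Y = (if X = I \<and> Y = J then c else if X = J \<and> Y = I then cnj c else 0)"

end

theory Submission
  imports Defs
begin

definition Sset :: "nat \<Rightarrow> (nat \<Rightarrow> 'a set) \<Rightarrow> 'a \<Rightarrow> (nat \<Rightarrow> 'a) set" where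
  "Sset m A z = {X. (\<forall>k<m. X k \<in> A k) \<and> (\<forall>k\<ge>m. X k = z)}"

lemma Sset_Suc: "Sset (Suc m) A z = (\<lambda>(X,a). X(m:=a)) ` (Sset m A z \<times> A m)"
proof
  show "Sset (Suc m) A z \<subseteq> (\<lambda>(X,a). X(m:=a)) ` (Sset m A z \<times> A m)"
  proof
    fix X assume X: "X \<in> Sset (Suc m) A z"
    have "X = (\<lambda>(X,a). X(m:=a)) (X(m:=z), X m)" by auto
    moreover have "(X(m:=z), X m) \<in> Sset m A z \<times> A m"
      using X unfolding Sset_def by (auto simp: less_Suc_eq)
    ultimately show "X \<in> (\<lambda>(X,a). X(m:=a)) ` (Sset m A z \<times> A m)" by blast
  qed
next
  show "(\<lambda>(X,a). X(m:=a)) ` (Sset m A z \<times> A m) \<subseteq> Sset (Suc m) A z"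
    by (auto simp: Sset_def less_Suc_eq)
qed

lemma Sset_inj: "inj_on (\<lambda>(X,a). X(m:=a)) (Sset m A z \<times> A m)"
proof (rule inj_onI, clarify)
  fix X a Y b assume X: "X \<in> Sset m A z" and Y: "Y \<in> Sset m A z" and e: "X(m := a) = Y(m := b)"
  have "a = b" using fun_cong[OF e, of m] by simp
  moreover have "X = Y"
  proof
    fix k show "X k = Y k"
    proof (cases "k = m")
      case True thus ?thesis using X Y by (simp add: Sset_def)
    next
      case False thus ?thesis using fun_cong[OF e, of k] by simp
    qed
  qed
  ultimately show "X = Y \<and> a = b" by simp
qed

lemma finite_Sset: assumes "\<And>k. finite (A k)" shows "finite (Sset m A z)"
proof (induction m)
  case 0
  have "Sset 0 A z = {\<lambda>_. z}" by (auto simp: Sset_def)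
  thus ?case by simp
next
  case (Suc m) thus ?case unfolding Sset_Suc using assms by auto
qed

lemma sum_prod_Sset:
  "(\<Sum>X\<in>Sset m A z. \<Prod>k<m. f k (X k)) = (\<Prod>k<m. \<Sum>x\<in>A k. (f k x :: 'b::comm_semiring_1))"
proof (induction m)
  case 0
  have "Sset 0 A z = {\<lambda>_. z}" by (auto simp: Sset_def)
  thus ?case by simp
next
  case (Suc m)
  have "(\<Sum>X\<in>Sset (Suc m) A z. \<Prod>k<Suc m. f k (X k))
      = (\<Sum>p\<in>Sset m A z \<times> A m. \<Prod>k<Suc m. f k (((\<lambda>(X,a). X(m:=a)) p) k))"
    by (simp add: Sset_Suc sum.reindex[OF Sset_inj])
  also have "\<dots> = (\<Sum>p\<in>Sset m A z \<times> A m. (\<Prod>k<m. f k (fst p k)) * f m (snd p))"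
    by (rule sum.cong) (auto intro!: prod.cong)
  also have "\<dots> = (\<Sum>X\<in>Sset m A z. \<Sum>a\<in>A m. (\<Prod>k<m. f k (X k)) * f m a)"
    by (simp add: sum.cartesian_product case_prod_beta)
  also have "\<dots> = (\<Sum>X\<in>Sset m A z. \<Prod>k<m. f k (X k)) * (\<Sum>a\<in>A m. f m a)"
    by (simp add: sum_product)
  finally show ?case using Suc by simp
qed

definition qf :: "real \<Rightarrow> complex \<Rightarrow> complex \<Rightarrow> complex \<Rightarrow> complex" where
  "qf \<alpha> p va vb = va * cnj va * complex_of_real \<alpha> + va * cnj vb * p + vb * cnj va * cnj p"

lemma qf_eq: "qf \<alpha> p va vb = complex_of_real (\<alpha> * (cmod va)^2 + 2 * Re (va * cnj vb * p))"
  unfolding cmod_power2 by (simp add: qf_def complex_eq_iff algebra_simps power2_eq_square)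

lemma qf_B: "\<exists>\<alpha>. qf \<alpha> p va vb = 0"
proof (cases "va = 0")
  case True thus ?thesis by (auto simp: qf_def)
next
  case False
  hence "cmod va ^ 2 > 0" by simp
  thus ?thesis
    by (intro exI[of _ "- 2 * Re (va * cnj vb * p) / (cmod va)^2"]) (simp add: qf_eq)
qed

lemma qf_A: "\<exists>\<alpha> p. p \<noteq> 0 \<and> qf \<alpha> p va vb = 0 \<and> qf \<alpha> p wa wb = 0"
proof (cases "va = 0")
  case True
  obtain \<alpha> where "qf \<alpha> 1 wa wb = 0" using qf_B by blast
  thus ?thesis using True by (intro exI[of _ \<alpha>] exI[of _ 1]) (auto simp: qf_def)
next
  case False
  define A1 where "A1 = (cmod va)^2"
  define A2 where "A2 = (cmod wa)^2"
  have A1: "A1 > 0" using False by (simp add: A1_def)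
  define \<delta> where "\<delta> = wa * cnj wb - complex_of_real (A2/A1) * (va * cnj vb)"
  define p where "p = (if \<delta> = 0 then 1 else \<i> * cnj \<delta>)"
  have p0: "p \<noteq> 0" by (simp add: p_def)
  have rd: "Re (\<delta> * p) = 0"
    by (simp add: p_def)
  define \<alpha> where "\<alpha> = - 2 * Re (va * cnj vb * p) / A1"
  have e1: "qf \<alpha> p va vb = 0" using A1 by (simp add: qf_eq \<alpha>_def A1_def)
  have "Re (\<delta> * p) = Re (wa * cnj wb * p) - (A2/A1) * Re (va * cnj vb * p)"
  proof -
    have "\<delta> * p = wa * cnj wb * p - complex_of_real (A2/A1) * (va * cnj vb * p)"
      by (simp add: \<delta>_def algebra_simps)
    thus ?thesis by simp
  qed
  hence h: "Re (wa * cnj wb * p) = (A2/A1) * Re (va * cnj vb * p)" using rd by simp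
  have "\<alpha> * (cmod wa)^2 + 2 * Re (wa * cnj wb * p) = 0"
    unfolding A2_def[symmetric] h \<alpha>_def using A1 by (simp add: field_simps)
  hence e2: "qf \<alpha> p wa wb = 0" unfolding qf_eq by simp
  show ?thesis using p0 e1 e2 by blast
qed

definition phi :: "nat \<Rightarrow> (nat\<Rightarrow>nat) \<Rightarrow> (nat\<Rightarrow>nat) \<Rightarrow> (nat\<Rightarrow>nat\<Rightarrow>nat\<Rightarrow>complex) \<Rightarrow> ((nat\<Rightarrow>nat)\<Rightarrow>(nat\<Rightarrow>nat)\<Rightarrow>complex) \<Rightarrow> complex" where
"phi m I J P H = (\<Sum>X\<in>Sset m (\<lambda>k. {I k, J k}) 0. \<Sum>Y\<in>Sset m (\<lambda>k. {I k, J k}) 0. H X Y * (\<Prod>k<m. P k (X k) (Y k)))"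

lemma phi_rank_one: "phi m I J P (herm_rank_one m v) =
   (\<Prod>k<m. \<Sum>x\<in>{I k, J k}. \<Sum>y\<in>{I k,J k}. v k x * cnj (v k y) * P k x y)"
proof -
  let ?S = "Sset m (\<lambda>k. {I k, J k}) 0"
  have "phi m I J P (herm_rank_one m v) = (\<Sum>X\<in>?S. \<Sum>Y\<in>?S. \<Prod>k<m. v k (X k) * cnj (v k (Y k)) * P k (X k) (Y k))"
    unfolding phi_def herm_rank_one_def by (simp add: prod.distrib)
  also have "\<dots> = (\<Sum>X\<in>?S. \<Prod>k<m. \<Sum>y\<in>{I k, J k}. v k (X k) * cnj (v k y) * P k (X k) y)"
    by (rule sum.cong[OF refl], rule sum_prod_Sset)
  also have "\<dots> = (\<Prod>k<m. \<Sum>x\<in>{I k, J k}. \<Sum>y\<in>{I k,J k}. v k x * cnj (v k y) * P k x y)"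
    by (rule sum_prod_Sset)
  finally show ?thesis .
qed

lemma phi_sum: "phi m I J P (\<lambda>X Y. \<Sum>i<r. f i X Y) = (\<Sum>i<r. phi m I J P (f i))"
  unfolding phi_def by (simp add: sum_distrib_right sum.swap[of _ "{..<r}"])

lemma phi_scale: "phi m I J P (\<lambda>X Y. a * H X Y) = a * phi m I J P H"
  unfolding phi_def by (simp add: sum_distrib_left mult.assoc)

lemma phi_cong: assumes "\<And>X Y. X \<in> Sset m (\<lambda>k. {I k, J k}) 0 \<Longrightarrow> Y \<in> Sset m (\<lambda>k. {I k, J k}) 0 \<Longrightarrow> H X Y = H' X Y"
  shows "phi m I J P H = phi m I J P H'"
  unfolding phi_def using assms by (auto intro!: sum.cong)

lemma Sset_valid: assumes "valid_idx m n I" "valid_idx m n J" "X \<in> Sset m (\<lambda>k. {I k, J k}) 0"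
  shows "valid_idx m n X"
  using assms by (auto simp: valid_idx_def Sset_def)

lemma I_in_Sset: assumes "valid_idx m n I" shows "I \<in> Sset m (\<lambda>k. {I k, J k}) 0"
  using assms by (auto simp: valid_idx_def Sset_def)
lemma J_in_Sset: assumes "valid_idx m n J" shows "J \<in> Sset m (\<lambda>k. {I k, J k}) 0"
  using assms by (auto simp: valid_idx_def Sset_def)

lemma double_delta: assumes "finite S" "a \<in> S" "b \<in> S"
  shows "(\<Sum>X\<in>S. \<Sum>Y\<in>S. if X = a then (if Y = b then (v::complex) else 0) else 0) = v"
proof -
  have "(\<Sum>X\<in>S. \<Sum>Y\<in>S. if X = a then (if Y = b then v else 0) else 0)
     = (\<Sum>X\<in>S. if X = a then (\<Sum>Y\<in>S. if Y = b then v else 0) else 0)"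
    by (rule sum.cong) auto
  thus ?thesis using assms by simp
qed

lemma phi_E: assumes "valid_idx m n I" "valid_idx m n J" "I \<noteq> J"
  shows "phi m I J P (E_tensor I J c) = c * (\<Prod>k<m. P k (I k) (J k)) + cnj c * (\<Prod>k<m. P k (J k) (I k))"
proof -
  let ?S = "Sset m (\<lambda>k. {I k, J k}) 0"
  let ?F = "\<lambda>X Y. \<Prod>k<m. P k (X k) (Y k)"
  have "\<And>X Y. E_tensor I J c X Y * ?F X Y = (if X = I then (if Y = J then c * ?F I J else 0) else 0)
     + (if X = J then (if Y = I then cnj c * ?F J I else 0) else 0)"
    using assms(3) by (auto simp: E_tensor_def)
  hence "phi m I J P (E_tensor I J c) = (\<Sum>X\<in>?S. \<Sum>Y\<in>?S. (if X = I then (if Y = J then c * ?F I J else 0) else 0)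
     + (if X = J then (if Y = I then cnj c * ?F J I else 0) else 0))"
    unfolding phi_def by presburger
  also have "\<dots> = c * ?F I J + cnj c * ?F J I"
    using I_in_Sset[OF assms(1)] J_in_Sset[OF assms(2)]
    by (simp only: sum.distrib double_delta finite_Sset finite.insertI finite.emptyI)
  finally show ?thesis .
qed

lemma lower:
  assumes vI: "valid_idx m n I" and vJ: "valid_idx m n J" and IJ: "I \<noteq> J" and c: "c \<noteq> 0"
    and dec: "has_herm_decomp m n (E_tensor I J c) r"
  shows "2 * card {k. k < m \<and> I k \<noteq> J k} \<le> r"
proof (rule ccontr)
  define K where "K = {k. k < m \<and> I k \<noteq> J k}"
  define d where "d = card K"
  assume "\<not> 2 * card {k. k < m \<and> I k \<noteq> J k} \<le> r"
  hence r: "r < 2 * d" by (simp add: K_def d_def)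
  have fK: "finite K" by (simp add: K_def)
  have "K \<noteq> {}"
  proof
    assume "K = {}"
    hence "\<forall>k<m. I k = J k" by (auto simp: K_def)
    moreover have "\<forall>k\<ge>m. I k = J k" using vI vJ by (simp add: valid_idx_def)
    ultimately have "I = J" by (metis not_less ext)
    thus False using IJ by simp
  qed
  hence d0: "d > 0" using fK by (simp add: d_def card_gt_0_iff)
  obtain g where g: "bij_betw g {0..<d} K" using ex_bij_betw_nat_finite[OF fK] d_def by blast
  define h where "h = inv_into {0..<d} g"
  have hg: "\<And>t. t < d \<Longrightarrow> h (g t) = t" using g by (simp add: h_def bij_betw_def)
  have gK: "\<And>t. t < d \<Longrightarrow> g t \<in> K" using g by (auto simp: bij_betw_def)
  have gh: "\<And>k. k \<in> K \<Longrightarrow> h k < d \<and> g (h k) = k" using g unfolding h_def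
    by (metis atLeastLessThan_iff bij_betw_def bij_betw_inv_into_right inv_into_into)
  obtain lam u where dec: "\<And>X Y. valid_idx m n X \<Longrightarrow> valid_idx m n Y \<Longrightarrow>
      E_tensor I J c X Y = (\<Sum>i<r. complex_of_real (lam i) * herm_rank_one m (u i) X Y)"
    using dec unfolding has_herm_decomp_def by blast
  have "\<forall>t\<in>{1..<d}. \<exists>z. snd z \<noteq> 0
      \<and> qf (fst z) (snd z) (u (2*t-1) (g t) (I (g t))) (u (2*t-1) (g t) (J (g t))) = 0
      \<and> qf (fst z) (snd z) (u (2*t) (g t) (I (g t))) (u (2*t) (g t) (J (g t))) = 0"
    using qf_A by fastforce
  then obtain z where z: "\<forall>t\<in>{1..<d}. snd (z t) \<noteq> 0
      \<and> qf (fst (z t)) (snd (z t)) (u (2*t-1) (g t) (I (g t))) (u (2*t-1) (g t) (J (g t))) = 0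
      \<and> qf (fst (z t)) (snd (z t)) (u (2*t) (g t) (I (g t))) (u (2*t) (g t) (J (g t))) = 0"
    by (metis bchoice)
  define R where "R = (\<Prod>t\<in>{1..<d}. snd (z t))"
  define Q where "Q = c * R"
  have R0: "R \<noteq> 0" using z by (simp add: R_def)
  hence Q0: "Q \<noteq> 0" using c by (simp add: Q_def)
  define p0 where "p0 = cnj Q"
  obtain \<alpha>0 where a0: "qf \<alpha>0 p0 (u 0 (g 0) (I (g 0))) (u 0 (g 0) (J (g 0))) = 0" using qf_B by blast
  define ALP where "ALP t = (if t = 0 then \<alpha>0 else fst (z t))" for t
  define PP where "PP t = (if t = 0 then p0 else snd (z t))" for t
  define P where "P k x y = (if k \<in> K then (if x = I k \<and> y = I k then complex_of_real (ALP (h k))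
      else if x = I k \<and> y = J k then PP (h k) else if x = J k \<and> y = I k then cnj (PP (h k)) else 0)
      else (if x = I k \<and> y = I k then 1 else 0))" for k x y
  have Pone: "(\<Sum>x\<in>{I k,J k}. \<Sum>y\<in>{I k, J k}. v x * cnj (v y) * P k x y) =
     (if k \<in> K then qf (ALP (h k)) (PP (h k)) (v (I k)) (v (J k)) else v (I k) * cnj (v (I k)))"
    for v :: "nat \<Rightarrow> complex" and k
  proof (cases "k \<in> K")
    case True
    hence "I k \<noteq> J k" by (simp add: K_def)
    thus ?thesis using True by (simp add: P_def qf_def algebra_simps)
  next
    case False
    thus ?thesis by (cases "I k = J k") (auto simp: P_def K_def)
  qed
  have "phi m I J P (E_tensor I J c) =
      phi m I J P (\<lambda>X Y. \<Sum>i<r. complex_of_real (lam i) * herm_rank_one m (u i) X Y)"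
    by (rule phi_cong) (metis dec Sset_valid vI vJ)
  also have "\<dots> = (\<Sum>i<r. complex_of_real (lam i) * phi m I J P (herm_rank_one m (u i)))"
    by (simp add: phi_sum phi_scale)
  also have "\<dots> = 0"
  proof (rule sum.neutral, rule ballI)
    fix i assume "i \<in> {..<r}"
    hence i: "i < r" by simp
    define t where "t = (i + 1) div 2"
    have td: "t < d" using r i by (simp add: t_def)
    define k where "k = g t"
    have kK: "k \<in> K" using gK[OF td] by (simp add: k_def)
    hence km: "k < m" by (simp add: K_def)
    have hk: "h k = t" using hg[OF td] by (simp add: k_def)
    have "qf (ALP t) (PP t) (u i k (I k)) (u i k (J k)) = 0"
    proof (cases "t = 0")
      case True
      hence "i = 0" by (simp add: t_def)
      thus ?thesis using a0 True by (simp add: ALP_def PP_def k_def)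
    next
      case False
      hence t1: "t \<in> {1..<d}" using td by simp
      have "i = 2*t - 1 \<or> i = 2*t" using False by (simp add: t_def) arith
      thus ?thesis using z t1 False by (auto simp: ALP_def PP_def k_def)
    qed
    hence "(\<Sum>x\<in>{I k,J k}. \<Sum>y\<in>{I k, J k}. u i k x * cnj (u i k y) * P k x y) = 0"
      using Pone[of "u i k" k] kK hk by simp
    hence "phi m I J P (herm_rank_one m (u i)) = 0"
      unfolding phi_rank_one using km by (intro prod_zero) auto
    thus "complex_of_real (lam i) * phi m I J P (herm_rank_one m (u i)) = 0" by simp
  qed
  finally have E0: "phi m I J P (E_tensor I J c) = 0" .
  have pr: "(\<Prod>k<m. f k) = (\<Prod>t\<in>{0..<d}. f (g t))" if "\<And>k. k < m \<Longrightarrow> k \<notin> K \<Longrightarrow> f k = 1" for f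
  proof -
    have "(\<Prod>k<m. f k) = (\<Prod>k\<in>{k\<in>{..<m}. I k \<noteq> J k}. f k)"
      using that by (subst prod.inter_filter) (auto simp: K_def intro!: prod.cong)
    also have "\<dots> = (\<Prod>k\<in>K. f k)" by (simp add: K_def)
    also have "\<dots> = (\<Prod>t\<in>{0..<d}. f (g t))" by (rule prod.reindex_bij_betw[OF g, symmetric])
    finally show ?thesis .
  qed
  have "(\<Prod>k<m. P k (I k) (J k)) = (\<Prod>t\<in>{0..<d}. P (g t) (I (g t)) (J (g t)))"
    by (rule pr) (auto simp: P_def K_def)
  also have "\<dots> = (\<Prod>t\<in>{0..<d}. PP t)"
  proof (rule prod.cong[OF refl])
    fix t assume "t \<in> {0..<d}"
    hence "g t \<in> K" "h (g t) = t" using gK hg by auto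
    moreover hence "I (g t) \<noteq> J (g t)" by (simp add: K_def)
    ultimately show "P (g t) (I (g t)) (J (g t)) = PP t" by (simp add: P_def)
  qed
  also have "\<dots> = p0 * R"
    using d0 by (simp add: prod.atLeast_Suc_lessThan PP_def R_def)
  finally have P1: "(\<Prod>k<m. P k (I k) (J k)) = p0 * R" .
  have "(\<Prod>k<m. P k (J k) (I k)) = (\<Prod>t\<in>{0..<d}. P (g t) (J (g t)) (I (g t)))"
    by (rule pr) (auto simp: P_def K_def)
  also have "\<dots> = (\<Prod>t\<in>{0..<d}. cnj (PP t))"
  proof (rule prod.cong[OF refl])
    fix t assume "t \<in> {0..<d}"
    hence "g t \<in> K" "h (g t) = t" using gK hg by auto
    moreover hence "I (g t) \<noteq> J (g t)" by (simp add: K_def)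
    ultimately show "P (g t) (J (g t)) (I (g t)) = cnj (PP t)" by (simp add: P_def)
  qed
  also have "\<dots> = cnj (p0 * R)"
    using d0 by (simp add: prod.atLeast_Suc_lessThan PP_def R_def)
  finally have P2: "(\<Prod>k<m. P k (J k) (I k)) = cnj (p0 * R)" .
  have "phi m I J P (E_tensor I J c) = Q * cnj Q + cnj (Q * cnj Q)"
    unfolding phi_E[OF vI vJ IJ] P1 P2 by (simp add: p0_def Q_def algebra_simps)
  also have "\<dots> = complex_of_real (2 * ((Re Q)^2 + (Im Q)^2))"
    by (simp add: complex_eq_iff power2_eq_square)
  moreover have "(Re Q)^2 + (Im Q)^2 \<noteq> 0" using Q0 by (simp add: complex_eq_iff sum_power2_eq_zero_iff)
  ultimately have "phi m I J P (E_tensor I J c) \<noteq> 0" by (metis mult_eq_0_iff of_real_eq_0_iff zero_neq_numeral)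
  thus False using E0 by simp
qed

lemma dvd_lemma:
  fixes d a b :: nat
  assumes "a \<le> d" "b \<le> d" "d > 0"
  shows "(2*d dvd (d + a + (2*d-1)*b)) \<longleftrightarrow> ((a = 0 \<and> b = d) \<or> (a = d \<and> b = 0))"
proof -
  define s where "s = d + a - b"
  have e: "d + a + (2*d-1)*b = s + 2*d*b"
    using assms by (simp add: s_def diff_mult_distrib algebra_simps)
  have "(2*d dvd (d + a + (2*d-1)*b)) \<longleftrightarrow> 2*d dvd s" unfolding e by (metis dvd_add_times_triv_right_iff mult.commute)
  also have "\<dots> \<longleftrightarrow> s = 0 \<or> s = 2*d"
  proof
    assume "2*d dvd s"
    then obtain q where q: "s = 2*d*q" by blast
    have "s \<le> 2*d" using assms by (simp add: s_def)
    hence "q \<le> 1" using q assms by (metis mult.right_neutral mult_le_cancel1 nat_0_less_mult_iff not_less zero_less_numeral)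
    thus "s = 0 \<or> s = 2*d" using q by (cases q) auto
  qed auto
  also have "\<dots> \<longleftrightarrow> ((a = 0 \<and> b = d) \<or> (a = d \<and> b = 0))" using assms by (auto simp: s_def)
  finally show ?thesis .
qed

definition om :: "nat \<Rightarrow> complex" where "om d = cis (pi / real d)"

lemma om_pow2d: assumes "d > 0" shows "om d ^ (2*d) = 1"
proof -
  have "real (2*d) * (pi / real d) = 2 * pi" using assms by (simp add: field_simps)
  thus ?thesis unfolding om_def DeMoivre by simp
qed
lemma om_powd: assumes "d > 0" shows "om d ^ d = -1"
proof -
  have "real d * (pi / real d) = pi" using assms by (simp add: field_simps)
  thus ?thesis unfolding om_def DeMoivre by simp
qed
lemma om_cnj: assumes "d > 0" shows "cnj (om d) = om d ^ (2*d-1)"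
proof -
  have s: "2*d = Suc (2*d-1)" using assms by simp
  have "om d * om d ^ (2*d-1) = om d ^ (2*d)" by (subst s) simp
  hence "om d * om d ^ (2*d-1) = 1" using om_pow2d[OF assms] by simp
  hence a: "inverse (om d) = om d ^ (2*d-1)" by (rule inverse_unique)
  have "om d * cnj (om d) = 1" unfolding om_def cis_cnj by (simp add: cis_mult)
  hence "inverse (om d) = cnj (om d)" by (rule inverse_unique)
  thus ?thesis using a by simp
qed

lemma om_ne1: assumes "0 < M" "M < 2*d" shows "om d ^ M \<noteq> 1"
proof
  assume "om d ^ M = 1"
  hence "cis (real M * (pi / real d)) = 1" by (simp add: om_def DeMoivre)
  hence "cos (real M * (pi / real d)) = 1" by (metis cis.sel(1) one_complex.sel(1))
  then obtain q :: int where q: "real M * (pi / real d) = real_of_int q * 2 * pi" using cos_one_2pi_int by blast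
  have d0: "d > 0" using assms by simp
  have "real M = real_of_int q * 2 * real d"
  proof -
    have "real M * (pi / real d) * real d = real_of_int q * 2 * pi * real d" using q by simp
    hence "real M * pi = real_of_int q * 2 * real d * pi" using d0 by (simp add: field_simps)
    thus ?thesis by simp
  qed
  hence "real_of_int (int M) = real_of_int (q * (2 * int d))" by simp
  hence qi: "int M = q * (2 * int d)" by (simp only: of_int_eq_iff)
  have pd: "0 < 2 * int d" using d0 by simp
  have "0 < q * (2 * int d)" using assms qi by simp
  hence "0 < q" using pd by (simp add: zero_less_mult_iff)
  moreover have "q < 1"
  proof (rule ccontr)
    assume "\<not> q < 1"
    hence "1 * (2 * int d) \<le> q * (2 * int d)" using pd by (intro mult_right_mono) auto
    hence "2 * int d \<le> int M" using qi by linarith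
    thus False using assms(2) by linarith
  qed
  ultimately show False by simp
qed

lemma om_sum: assumes "d > 0"
  shows "(\<Sum>j<2*d. (om d ^ N) ^ j) = (if 2*d dvd N then of_nat (2*d) else 0)"
proof (cases "2*d dvd N")
  case True
  then obtain q where "N = 2*d*q" by blast
  hence "om d ^ N = 1" using om_pow2d[OF assms] by (simp add: power_mult)
  thus ?thesis using True by simp
next
  case False
  have "om d ^ N = om d ^ (2*d * (N div (2*d)) + N mod (2*d))" by simp
  also have "\<dots> = (om d ^ (2*d)) ^ (N div (2*d)) * om d ^ (N mod (2*d))"
    by (simp only: power_add power_mult)
  also have "\<dots> = om d ^ (N mod (2*d))" using om_pow2d[OF assms] by simp
  finally have e: "om d ^ N = om d ^ (N mod (2*d))" .
  have "N mod (2*d) > 0" "N mod (2*d) < 2*d" using False assms by (auto simp: dvd_eq_mod_eq_0)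
  hence ne: "om d ^ N \<noteq> 1" unfolding e by (rule om_ne1)
  have "(om d ^ N) ^ (2*d) = (om d ^ (2*d)) ^ N"
    by (simp only: power_mult[symmetric] mult.commute)
  hence "(om d ^ N) ^ (2*d) = 1" using om_pow2d[OF assms] by simp
  thus ?thesis using ne False by (simp add: sum_gp_strict)
qed

lemma upper:
  assumes vI: "valid_idx m n I" and vJ: "valid_idx m n J" and IJ: "I \<noteq> J"
  shows "has_herm_decomp m n (E_tensor I J c) (2 * card {k. k < m \<and> I k \<noteq> J k})"
proof -
  define K where "K = {k. k < m \<and> I k \<noteq> J k}"
  define d where "d = card K"
  have fK: "finite K" by (simp add: K_def)
  have "K \<noteq> {}"
  proof
    assume "K = {}"
    hence "\<forall>k<m. I k = J k" by (auto simp: K_def)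
    moreover have "\<forall>k\<ge>m. I k = J k" using vI vJ by (simp add: valid_idx_def)
    ultimately have "I = J" by (metis not_less ext)
    thus False using IJ by simp
  qed
  then obtain k0 where k0: "k0 \<in> K" by blast
  have d0: "d > 0" using fK k0 by (auto simp: d_def card_gt_0_iff)
  define w where "w = om d"
  define \<mu> where "\<mu> k = (if k = k0 then cnj c / of_nat (2*d) else 1)" for k
  define u where "u j k x = (if x = I k then 1 else if x = J k then w^j * \<mu> k else 0)" for j k x
  define lam where "lam j = (-1::real)^j" for j
  define G where "G X = (\<forall>k<m. X k = I k \<or> X k = J k)" for X :: "nat \<Rightarrow> nat"
  define KS where "KS X = {k. k < m \<and> X k \<noteq> I k}" for X :: "nat \<Rightarrow> nat"
  have prodU: "(\<Prod>k<m. u j k (X k)) = (if G X then (w^j)^(card (KS X)) * (\<Prod>k\<in>KS X. \<mu> k) else 0)" for j X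
  proof (cases "G X")
    case False
    then obtain k where "k < m" "X k \<noteq> I k" "X k \<noteq> J k" by (auto simp: G_def)
    hence "(\<Prod>k<m. u j k (X k)) = 0" by (intro prod_zero) (auto simp: u_def)
    thus ?thesis using False by simp
  next
    case True
    have "(\<Prod>k<m. u j k (X k)) = (\<Prod>k<m. if X k \<noteq> I k then w^j * \<mu> k else 1)"
      using True by (intro prod.cong) (auto simp: u_def G_def)
    also have "\<dots> = (\<Prod>k\<in>{k\<in>{..<m}. X k \<noteq> I k}. w^j * \<mu> k)"
      by (rule prod.inter_filter[symmetric]) simp
    also have "\<dots> = (\<Prod>k\<in>KS X. w^j * \<mu> k)" by (simp add: KS_def)
    also have "\<dots> = (w^j)^(card (KS X)) * (\<Prod>k\<in>KS X. \<mu> k)" by (simp add: prod.distrib)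
    finally show ?thesis using True by simp
  qed
  have KSK: "G X \<Longrightarrow> KS X \<subseteq> K" for X by (auto simp: G_def KS_def K_def)
  have fKS: "finite (KS X)" for X by (simp add: KS_def)
  have KS0: "valid_idx m n X \<Longrightarrow> (card (KS X) = 0) = (X = I)" for X
  proof -
    assume vX: "valid_idx m n X"
    have "card (KS X) = 0 \<longleftrightarrow> KS X = {}" using fKS by simp
    also have "\<dots> \<longleftrightarrow> X = I"
    proof
      assume "KS X = {}"
      hence "\<forall>k<m. X k = I k" by (auto simp: KS_def)
      moreover have "\<forall>k\<ge>m. X k = I k" using vI vX by (simp add: valid_idx_def)
      ultimately show "X = I" by (metis not_less ext)
    qed (auto simp: KS_def)
    finally show ?thesis .
  qed
  have KSd: "valid_idx m n X \<Longrightarrow> G X \<Longrightarrow> (card (KS X) = d) = (X = J)" for X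
  proof -
    assume vX: "valid_idx m n X" and gX: "G X"
    have "card (KS X) = d \<longleftrightarrow> KS X = K" using card_subset_eq[OF fK KSK[OF gX]] d_def by auto
    also have "\<dots> \<longleftrightarrow> X = J"
    proof
      assume e: "KS X = K"
      have "\<forall>k<m. X k = J k"
      proof (intro allI impI)
        fix k assume "k < m"
        show "X k = J k"
        proof (cases "I k = J k")
          case True
          have "X k = I k"
          proof (rule ccontr)
            assume "X k \<noteq> I k"
            hence "k \<in> KS X" using \<open>k < m\<close> by (simp add: KS_def)
            thus False using e True by (simp add: K_def)
          qed
          thus ?thesis using True by simp
        next
          case False
          hence "k \<in> KS X" using e \<open>k < m\<close> by (simp add: K_def)
          thus ?thesis using gX \<open>k < m\<close> by (auto simp: KS_def G_def)
        qed
      qed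
      moreover have "\<forall>k\<ge>m. X k = J k" using vJ vX by (simp add: valid_idx_def)
      ultimately show "X = J" by (metis not_less ext)
    qed (auto simp: KS_def K_def)
    finally show ?thesis .
  qed
  have GI: "G I" and GJ: "G J" by (auto simp: G_def)
  show ?thesis
    unfolding has_herm_decomp_def K_def[symmetric] d_def[symmetric]
  proof (intro exI[of _ lam] exI[of _ u] allI impI)
    fix X Y assume vX: "valid_idx m n X" and vY: "valid_idx m n Y"
    have hr: "herm_rank_one m (u j) X Y = (\<Prod>k<m. u j k (X k)) * cnj (\<Prod>k<m. u j k (Y k))" for j
      by (simp add: herm_rank_one_def)
    show "E_tensor I J c X Y = (\<Sum>j<2*d. complex_of_real (lam j) * herm_rank_one m (u j) X Y)"
    proof (cases "G X \<and> G Y")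
      case False
      hence "X \<noteq> I \<and> X \<noteq> J \<or> Y \<noteq> I \<and> Y \<noteq> J" using GI GJ by auto
      hence "E_tensor I J c X Y = 0" by (auto simp: E_tensor_def)
      moreover have "herm_rank_one m (u j) X Y = 0" for j using False unfolding hr prodU by auto
      ultimately show ?thesis by simp
    next
      case True
      define a where "a = card (KS X)"
      define b where "b = card (KS Y)"
      define MX where "MX = (\<Prod>k\<in>KS X. \<mu> k)"
      define MY where "MY = (\<Prod>k\<in>KS Y. \<mu> k)"
      define N where "N = d + a + (2*d-1)*b"
      have ab: "a \<le> d" "b \<le> d"
        using card_mono[OF fK KSK[of X]] card_mono[OF fK KSK[of Y]] True by (auto simp: a_def b_def d_def)
      have trm: "complex_of_real (lam j) * herm_rank_one m (u j) X Y = (w^N)^j * (MX * cnj MY)" for j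
      proof -
        have 1: "complex_of_real (lam j) = (w^d)^j" using om_powd[OF d0] by (simp add: lam_def w_def)
        have 2: "herm_rank_one m (u j) X Y = (w^j)^a * MX * cnj ((w^j)^b * MY)"
          unfolding hr prodU using True by (simp add: a_def b_def MX_def MY_def)
        have 3: "cnj ((w^j)^b * MY) = ((w^(2*d-1))^j)^b * cnj MY"
          using om_cnj[OF d0] by (simp add: w_def)
        have 4: "(w^d)^j * ((w^j)^a * ((w^(2*d-1))^j)^b) = w^(d*j + j*a + (2*d-1)*j*b)"
          by (simp add: power_add power_mult)
        have 5: "d*j + j*a + (2*d-1)*j*b = N*j" by (simp add: N_def algebra_simps)
        have "complex_of_real (lam j) * herm_rank_one m (u j) X Y
            = ((w^d)^j * ((w^j)^a * ((w^(2*d-1))^j)^b)) * (MX * cnj MY)"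
          unfolding 1 2 3 by (simp add: algebra_simps)
        also have "\<dots> = (w^N)^j * (MX * cnj MY)" unfolding 4 5 by (simp add: power_mult)
        finally show ?thesis .
      qed
      have "(\<Sum>j<2*d. complex_of_real (lam j) * herm_rank_one m (u j) X Y)
          = (\<Sum>j<2*d. (w^N)^j) * (MX * cnj MY)"
        unfolding trm by (simp add: sum_distrib_right)
      also have "\<dots> = (if (X = I \<and> Y = J) \<or> (X = J \<and> Y = I) then of_nat (2*d) * (MX * cnj MY) else 0)"
      proof -
        have iff: "((a = 0 \<and> b = d) \<or> (a = d \<and> b = 0)) \<longleftrightarrow> ((X = I \<and> Y = J) \<or> (X = J \<and> Y = I))"
        proof -
          have A0: "(a = 0) = (X = I)" using KS0[OF vX] by (simp add: a_def)
          have B0: "(b = 0) = (Y = I)" using KS0[OF vY] by (simp add: b_def)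
          have Ad: "(a = d) = (X = J)" using KSd[OF vX] True by (simp add: a_def)
          have Bd: "(b = d) = (Y = J)" using KSd[OF vY] True by (simp add: b_def)
          show ?thesis by (simp only: A0 B0 Ad Bd)
        qed
        show ?thesis unfolding w_def om_sum[OF d0] N_def dvd_lemma[OF ab d0] iff by simp
      qed
      also have "\<dots> = E_tensor I J c X Y"
      proof -
        have MI: "(\<Prod>k\<in>KS I. \<mu> k) = 1" by (simp add: KS_def)
        have "KS J = K" by (auto simp: KS_def K_def)
        hence MJ: "(\<Prod>k\<in>KS J. \<mu> k) = cnj c / of_nat (2*d)"
          unfolding \<mu>_def using prod.delta[OF fK, of k0 "\<lambda>_. cnj c / of_nat (2*d)"] k0 by simp
        show ?thesis
        proof (cases "X = I \<and> Y = J")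
          case True
          hence "MX = 1" "MY = cnj c / of_nat (2*d)" using MI MJ by (simp_all add: MX_def MY_def)
          hence "of_nat (2*d) * (MX * cnj MY) = c" using d0 by simp
          moreover have "E_tensor I J c X Y = c" using True by (simp add: E_tensor_def)
          ultimately show ?thesis using True by simp
        next
          case nIJ: False
          show ?thesis
          proof (cases "X = J \<and> Y = I")
            case True
            hence "MY = 1" "MX = cnj c / of_nat (2*d)" using MI MJ by (simp_all add: MX_def MY_def)
            hence "of_nat (2*d) * (MX * cnj MY) = cnj c" using d0 by simp
            moreover have "E_tensor I J c X Y = cnj c" using True IJ by (auto simp: E_tensor_def)
            ultimately show ?thesis using True by simp
          next
            case False
            moreover have "E_tensor I J c X Y = 0" using False nIJ by (auto simp: E_tensor_def)
            ultimately show ?thesis using nIJ False by auto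
          qed
        qed
      qed
      finally show ?thesis by simp
    qed
  qed
qed

lemma prod_ind: assumes "valid_idx m n X" "valid_idx m n I"
  shows "(\<Prod>k<m. (if X k = I k then 1 else 0 :: complex)) = (if X = I then 1 else 0)"
proof (cases "X = I")
  case True thus ?thesis by simp
next
  case False
  have "\<exists>k<m. X k \<noteq> I k"
  proof (rule ccontr)
    assume "\<not> (\<exists>k<m. X k \<noteq> I k)"
    moreover have "\<forall>k\<ge>m. X k = I k" using assms by (simp add: valid_idx_def)
    ultimately have "X = I" by (metis not_less ext)
    thus False using False by simp
  qed
  hence "(\<Prod>k<m. (if X k = I k then 1 else 0 :: complex)) = 0" by (intro prod_zero) auto
  thus ?thesis using False by simp
qed

theorem theorem2p3:
  fixes m :: nat and n :: "nat \<Rightarrow> nat" and I J :: "nat \<Rightarrow> nat" and c :: complex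
  assumes "m \<ge> 1"
    and "\<forall>k<m. n k \<ge> 2"
    and "valid_idx m n I" and "valid_idx m n J"
    and "c \<noteq> 0"
    and "I = J \<longrightarrow> c \<in> \<real>"
  shows "(I = J \<longrightarrow> hrank m n (E_tensor I J c) = 1)
       \<and> (I \<noteq> J \<longrightarrow> hrank m n (E_tensor I J c) = 2 * card {k. k < m \<and> I k \<noteq> J k})"
proof (intro conjI impI)
  assume IJ: "I = J"
  hence cR: "complex_of_real (Re c) = c" using assms(6) by (simp add: complex_is_Real_iff complex_eq_iff)
  show "hrank m n (E_tensor I J c) = 1"
    unfolding hrank_def
  proof (rule Least_equality)
    show "has_herm_decomp m n (E_tensor I J c) 1"
      unfolding has_herm_decomp_def
    proof (intro exI[of _ "\<lambda>_. Re c"] exI[of _ "\<lambda>_ k x. if x = I k then 1 else 0"] allI impI)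
      fix X Y assume vX: "valid_idx m n X" and vY: "valid_idx m n Y"
      have h: "herm_rank_one m (\<lambda>k x. if x = I k then 1 else 0) X Y = (if X = I then 1 else 0) * (if Y = I then 1 else 0)"
        unfolding herm_rank_one_def using prod_ind[OF vX assms(3)] prod_ind[OF vY assms(3)]
        by (simp add: if_distrib[of cnj] cong: if_cong)
      show "E_tensor I J c X Y = (\<Sum>i<(1::nat). complex_of_real (Re c) * herm_rank_one m (\<lambda>k x. if x = I k then 1 else 0) X Y)"
      proof -
        have s: "(\<Sum>i<(1::nat). complex_of_real (Re c) * herm_rank_one m (\<lambda>k x. if x = I k then 1 else 0) X Y)
           = complex_of_real (Re c) * herm_rank_one m (\<lambda>k x. if x = I k then 1 else 0) X Y" by simp
        show ?thesis unfolding s h using IJ cR by (simp add: E_tensor_def)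
      qed
    qed
  next
    fix r assume "has_herm_decomp m n (E_tensor I J c) r"
    then obtain lam u where dec: "\<And>X Y. valid_idx m n X \<Longrightarrow> valid_idx m n Y \<Longrightarrow>
      E_tensor I J c X Y = (\<Sum>i<r. complex_of_real (lam i) * herm_rank_one m (u i) X Y)"
      unfolding has_herm_decomp_def by blast
    show "1 \<le> r"
    proof (rule ccontr)
      assume "\<not> 1 \<le> r"
      hence "r = 0" by simp
      hence "E_tensor I J c I I = 0" using dec[OF assms(3) assms(3)] by simp
      thus False using IJ assms(5) by (simp add: E_tensor_def)
    qed
  qed
next
  assume IJ: "I \<noteq> J"
  show "hrank m n (E_tensor I J c) = 2 * card {k. k < m \<and> I k \<noteq> J k}"
    unfolding hrank_def
  proof (rule Least_equality)
    show "has_herm_decomp m n (E_tensor I J c) (2 * card {k. k < m \<and> I k \<noteq> J k})"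
      by (rule upper[OF assms(3,4) IJ])
  next
    fix y assume "has_herm_decomp m n (E_tensor I J c) y"
    thus "2 * card {k. k < m \<and> I k \<noteq> J k} \<le> y" by (rule lower[OF assms(3,4) IJ assms(5)])
  qed
qed

end
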